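(* Let $K$ be a nonempty simplex in a topological vector space $F$ and let $T:K\to 2^{K}$ be a *-weakly naturally quasiconvex correspondence. Then there exists $x^*\in K$ such that $x^*\in\overline{T}(x^* )$.
   Context: A simplex is the convex hull of a finite affinely independent set. For $T:X\to 2^Y$: $\mathrm{Gr}(T)=\{(x,y):y\in T(x)\}$; $\overline{T}(x)=\{y\in Y:(x,y)\in\mathrm{cl}_{X\times Y}\mathrm{Gr}(T)\}$; for $V\subset F$, $T_V(x)=(T(x)+V)\cap Y$. $\Delta_{n-1}=\{(\lambda_1,\dots,\lambda_n)\in\mathbb{R}^n:\sum_i\lambda_i=1,\ \lambda_i\ge 0\}$. Weakly naturally quasiconvex (WNQ): let $X,Y$ be nonempty convex subsets of topological vector spaces. A correspondence $T:X\to 2^{Y}$ is weakly naturally quasiconvex if for each $n\in\mathbb{N}$ and each finite set $\{x_1,\dots,x_n\}\subset X$ there exist $y_i\in T(x_i)$ ($i=1,\dots,n$) and a bijection $g:\Delta_{n-1}\to\Delta_{n-1}$ (depending on $x_1,\dots,x_n$) of the form $g(\lambda_1,\dots,\lambda_n)=(g_1(\lambda_1),\dots,g_n(\lambda_n))$, where each $g_i:[0,1]\to[0,1]$ is continuous with $g_i(0)=0$ and $g_i(1)=1$, such that for every $(\lambda_1,\dots,\lambda_n)\in\Delta_{n-1}$ we have $\sum_{i=1}^n g_i(\lambda_i)y_i\in T\big(\sum_{i=1}^n\lambda_i x_i\big)$. *-weakly naturally quasiconvex: $T:X\to 2^Y$, $Y\subset F$, is *-weakly naturally quasiconvex if for each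 neighborhood $V$ of the origin in $F$ the correspondence $T_V$ is weakly naturally quasiconvex. *)

theory Defs
  imports "HOL-Analysis.Analysis"
begin

definition tvs :: "'a::{real_vector,topological_space} itself \<Rightarrow> bool" where
  "tvs _ \<longleftrightarrow>
     continuous_on UNIV (\<lambda>p::'a \<times> 'a. fst p + snd p) \<and>
     continuous_on UNIV (\<lambda>p::real \<times> 'a. fst p *\<^sub>R snd p)"

definition is_simplex :: "'a::real_vector set \<Rightarrow> bool" where
  "is_simplex K \<longleftrightarrow> (\<exists>S. finite S \<and> \<not> affine_dependent S \<and> K = convex hull S)"

definition corr_graph :: "('a \<Rightarrow> 'b set) \<Rightarrow> ('a \<times> 'b) set" where
  "corr_graph T = {(x, y). y \<in> T x}"

text \<open>\<open>closure_corr X Y T x\<close> is \<open>\<overline>T(x)\<close>: the closure of the corr_graph is taken in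
\<open>X \<times> Y\<close> with its subspace (product) topology.\<close>
definition closure_corr :: "'a::topological_space set \<Rightarrow> 'b::topological_space set
    \<Rightarrow> ('a \<Rightarrow> 'b set) \<Rightarrow> 'a \<Rightarrow> 'b set" where
  "closure_corr X Y T x = {y \<in> Y. (x, y) \<in> X \<times> Y \<and> (x, y) \<in> closure (corr_graph T \<inter> (X \<times> Y))}"

definition corr_V :: "'b::real_vector set \<Rightarrow> ('a \<Rightarrow> 'b set) \<Rightarrow> 'b set \<Rightarrow> 'a \<Rightarrow> 'b set" where
  "corr_V Y T V x = {y + v | y v. y \<in> T x \<and> v \<in> V} \<inter> Y"

definition std_simplex :: "nat \<Rightarrow> (nat \<Rightarrow> real) set" where
  "std_simplex n = {l. (\<forall>i<n. 0 \<le> l i) \<and> (\<forall>i\<ge>n. l i = 0) \<and> (\<Sum>i<n. l i) = 1}"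

definition wnq :: "'a::real_vector set \<Rightarrow> 'b::real_vector set \<Rightarrow> ('a \<Rightarrow> 'b set) \<Rightarrow> bool" where
  "wnq X Y T \<longleftrightarrow>
     (\<forall>n::nat. \<forall>x::nat \<Rightarrow> 'a. n \<ge> 1 \<and> inj_on x {..<n} \<and> (\<forall>i<n. x i \<in> X) \<longrightarrow>
        (\<exists>(y::nat \<Rightarrow> 'b) (g::nat \<Rightarrow> real \<Rightarrow> real).
           (\<forall>i<n. y i \<in> T (x i)) \<and>
           (\<forall>i<n. continuous_on {0..1} (g i) \<and> g i 0 = 0 \<and> g i 1 = 1 \<and> g i ` {0..1} \<subseteq> {0..1}) \<and>
           bij_betw (\<lambda>l. \<lambda>i. if i < n then g i (l i) else 0) (std_simplex n) (std_simplex n) \<and>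
           (\<forall>l\<in>std_simplex n. (\<Sum>i<n. g i (l i) *\<^sub>R y i) \<in> T (\<Sum>i<n. l i *\<^sub>R x i))))"

definition star_wnq :: "'a::real_vector set \<Rightarrow> 'b::{real_vector,topological_space} set
    \<Rightarrow> ('a \<Rightarrow> 'b set) \<Rightarrow> bool" where
  "star_wnq X Y T \<longleftrightarrow>
     (\<forall>V. (\<exists>U. open U \<and> (0::'b) \<in> U \<and> U \<subseteq> V) \<longrightarrow> wnq X Y (corr_V Y T V))"

end

theory Submission imports Defs "HOL-Homology.Brouwer_Degree" begin

definition nrm :: "nat \<Rightarrow> (nat \<Rightarrow> real) \<Rightarrow> real" where
  "nrm p w = (\<Sum>i\<le>p. (w i)^2)"
definition Bp :: "nat \<Rightarrow> (nat \<Rightarrow> real) set" where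
  "Bp p = {x. nrm p x \<le> 1 \<and> (\<forall>i>p. x i = 0)}"
definition Sp :: "nat \<Rightarrow> (nat \<Rightarrow> real) set" where
  "Sp p = {x. nrm p x = 1 \<and> (\<forall>i>p. x i = 0)}"
definition Nz :: "nat \<Rightarrow> (nat \<Rightarrow> real) \<Rightarrow> (nat \<Rightarrow> real)" where
  "Nz p w = (\<lambda>i. w i / sqrt (nrm p w))"

lemma nsphere_eq: "nsphere p = top_of_set (Sp p)"
  by (simp add: nsphere Sp_def nrm_def euclidean_product_topology)

lemma nrm_nonneg: "0 \<le> nrm p w" by (simp add: nrm_def sum_nonneg)

lemma Nz_in: assumes "nrm p w \<noteq> 0" "\<forall>i>p. w i = 0" shows "Nz p w \<in> Sp p"
proof -
  have "nrm p (Nz p w) = nrm p w / nrm p w"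
    using nrm_nonneg[of p w] by (simp add: nrm_def Nz_def power_divide sum_divide_distrib[symmetric])
  then show ?thesis using assms by (simp add: Sp_def Nz_def)
qed

lemma Nz_id: "x \<in> Sp p \<Longrightarrow> Nz p x = x"
  by (simp add: Sp_def Nz_def)

lemma nrm_zero_eq: assumes "nrm p w = 0" "j \<le> p" shows "w j = 0"
proof -
  have "\<forall>i\<in>{..p}. (w i)^2 = 0" using assms(1) unfolding nrm_def
    by (subst sum_nonneg_eq_0_iff[symmetric]) auto
  then show ?thesis using assms(2) by auto
qed

lemma cont_nz:
  fixes h :: "'a::topological_space \<Rightarrow> nat \<Rightarrow> real"
  assumes "\<And>i. continuous_on A (\<lambda>z. h z i)" "\<And>z. z \<in> A \<Longrightarrow> nrm p (h z) \<noteq> 0"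
  shows "continuous_on A (\<lambda>z. Nz p (h z))"
  unfolding Nz_def nrm_def
  apply (intro continuous_on_coordinatewise_then_product continuous_intros assms)
  using assms(2) nrm_nonneg unfolding nrm_def by auto

lemma brouwer_ball:
  assumes cf: "continuous_on (Bp p) f" and fB: "\<And>x. x \<in> Bp p \<Longrightarrow> f x \<in> Bp p"
  shows "\<exists>x\<in>Bp p. f x = x"
proof (rule ccontr)
  assume nfix: "\<not> ?thesis"
  have fi: "continuous_on (Bp p) (\<lambda>x. f x i)" for i
    by (rule continuous_on_compose2[OF continuous_on_product_coordinates cf]) auto
  have SB: "Sp p \<subseteq> Bp p" by (auto simp: Sp_def Bp_def)
  have diffnz: "nrm p (\<lambda>i. w i - f w i) \<noteq> 0" if w: "w \<in> Bp p" for w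
  proof
    assume "nrm p (\<lambda>i. w i - f w i) = 0"
    then have "w j = f w j" if "j \<le> p" for j using nrm_zero_eq[OF _ that] by fastforce
    moreover have "w j = f w j" if "j > p" for j using w fB[OF w] that by (auto simp: Bp_def)
    ultimately have "f w = w" by (metis ext not_le)
    then show False using nfix w by blast
  qed
  define H1 where "H1 = (\<lambda>z::real \<times> (nat \<Rightarrow> real). Nz p (\<lambda>i. snd z i - fst z * f (snd z) i))"
  define H2 where "H2 = (\<lambda>z::real \<times> (nat \<Rightarrow> real).
       Nz p (\<lambda>i. (1 - fst z) * snd z i - f (\<lambda>j. (1 - fst z) * snd z j) i))"
  have h1: "homotopic_with (\<lambda>x. True) (nsphere p) (nsphere p) id (\<lambda>x. Nz p (\<lambda>i. x i - f x i))"
  proof -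
    have nz: "nrm p (\<lambda>i. snd z i - fst z * f (snd z) i) \<noteq> 0" if z: "z \<in> {0..1} \<times> Sp p" for z
    proof
      obtain t x where tx: "z = (t,x)" "0 \<le> t" "t \<le> 1" "x \<in> Sp p" using z by auto
      assume "nrm p (\<lambda>i. snd z i - fst z * f (snd z) i) = 0"
      then have e: "x j = t * f x j" if "j \<le> p" for j using nrm_zero_eq[OF _ that] tx by fastforce
      have xB: "x \<in> Bp p" using SB tx by auto
      have "nrm p x = t^2 * nrm p (f x)"
        unfolding nrm_def by (simp add: e power_mult_distrib sum_distrib_left)
      moreover have "nrm p x = 1" using tx by (simp add: Sp_def)
      moreover have "nrm p (f x) \<le> 1" "0 \<le> nrm p (f x)" using fB[OF xB] nrm_nonneg by (auto simp: Bp_def)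
      ultimately have t21: "t^2 * nrm p (f x) = 1" by simp
      have "t^2 * nrm p (f x) \<le> t^2"
        by (rule mult_left_le) (use \<open>nrm p (f x) \<le> 1\<close> in auto)
      moreover have "t^2 \<le> 1" using tx by (simp add: power_le_one)
      ultimately have "t^2 = 1" using t21 by linarith
      then have "t = 1" using tx by (simp add: power2_eq_1_iff)
      then have "x j = f x j" if "j \<le> p" for j using e that by simp
      moreover have "x j = f x j" if "j > p" for j using xB fB[OF xB] that by (auto simp: Bp_def)
      ultimately have "f x = x" by (metis ext not_le)
      then show False using nfix xB by blast
    qed
    have c: "continuous_on ({0..1} \<times> Sp p) H1"
      unfolding H1_def
    proof (rule cont_nz[OF _ nz])
      fix i
      have "continuous_on ({0..1} \<times> Sp p) (\<lambda>z. f (snd z) i)"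
        by (rule continuous_on_compose2[OF fi continuous_on_snd]) (use SB in auto)
      then show "continuous_on ({0..1} \<times> Sp p) (\<lambda>z. snd z i - fst z * f (snd z) i)"
        by (intro continuous_intros continuous_on_compose2[OF continuous_on_product_coordinates continuous_on_snd]) auto
    qed
    have im: "H1 z \<in> Sp p" if "z \<in> {0..1} \<times> Sp p" for z
      unfolding H1_def
    proof (rule Nz_in[OF nz[OF that]])
      show "\<forall>i>p. snd z i - fst z * f (snd z) i = 0"
        using that fB[of "snd z"] SB by (auto simp: Sp_def Bp_def)
    qed
    have A: "continuous_map (prod_topology (top_of_set {0..1}) (nsphere p)) (nsphere p) H1"
      using c im by (simp add: nsphere_eq Pi_iff)
    have B: "\<forall>x\<in>topspace (nsphere p). H1 (0, x) = id x"
      by (simp add: nsphere_eq H1_def Nz_id)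
    have C: "\<forall>x\<in>topspace (nsphere p). H1 (1, x) = Nz p (\<lambda>i. x i - f x i)"
      by (simp add: H1_def)
    show ?thesis
      apply (subst homotopic_with, simp)
      apply (rule exI[where x=H1])
      using A B C by auto
  qed
  have h2: "homotopic_with (\<lambda>x. True) (nsphere p) (nsphere p) (\<lambda>x. Nz p (\<lambda>i. x i - f x i))
             (\<lambda>x. Nz p (\<lambda>i. 0 - f (\<lambda>j. 0) i))"
  proof -
    define m where "m = (\<lambda>z::real \<times> (nat \<Rightarrow> real). \<lambda>j. (1 - fst z) * snd z j)"
    have mB: "m z \<in> Bp p" if z: "z \<in> {0..1} \<times> Sp p" for z
    proof -
      obtain t x where tx: "z = (t,x)" "0 \<le> t" "t \<le> 1" "x \<in> Sp p" using z by auto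
      have "nrm p (m z) = (1-t)^2 * nrm p x"
        unfolding nrm_def m_def tx by (simp add: power_mult_distrib sum_distrib_left)
      also have "\<dots> = (1-t)^2" using tx by (simp add: Sp_def)
      also have "\<dots> \<le> 1" using tx by (simp add: power_le_one)
      finally show ?thesis using tx by (auto simp: Bp_def Sp_def m_def)
    qed
    have H2m: "H2 = (\<lambda>z. Nz p (\<lambda>i. m z i - f (m z) i))"
      by (simp add: H2_def m_def)
    have nz: "nrm p (\<lambda>i. m z i - f (m z) i) \<noteq> 0" if "z \<in> {0..1} \<times> Sp p" for z
      using diffnz[OF mB[OF that]] .
    have cm: "continuous_on ({0..1} \<times> Sp p) m"
      unfolding m_def
      by (intro continuous_on_coordinatewise_then_product continuous_intros
            continuous_on_compose2[OF continuous_on_product_coordinates continuous_on_snd]) auto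
    have c: "continuous_on ({0..1} \<times> Sp p) H2"
      unfolding H2m
    proof (rule cont_nz[OF _ nz])
      fix i
      have "continuous_on ({0..1} \<times> Sp p) (\<lambda>z. f (m z) i)"
        by (rule continuous_on_compose2[OF fi cm]) (use mB in auto)
      moreover have "continuous_on ({0..1} \<times> Sp p) (\<lambda>z. m z i)"
        by (rule continuous_on_compose2[OF continuous_on_product_coordinates cm]) auto
      ultimately show "continuous_on ({0..1} \<times> Sp p) (\<lambda>z. m z i - f (m z) i)"
        by (intro continuous_intros)
    qed
    have im: "H2 z \<in> Sp p" if "z \<in> {0..1} \<times> Sp p" for z
      unfolding H2m
    proof (rule Nz_in[OF nz[OF that]])
      show "\<forall>i>p. m z i - f (m z) i = 0"
        using mB[OF that] fB[OF mB[OF that]] by (auto simp: Bp_def)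
    qed
    have A: "continuous_map (prod_topology (top_of_set {0..1}) (nsphere p)) (nsphere p) H2"
      using c im by (simp add: nsphere_eq Pi_iff)
    have B: "\<forall>x\<in>topspace (nsphere p). H2 (0, x) = Nz p (\<lambda>i. x i - f x i)"
      by (simp add: H2_def)
    have C: "\<forall>x\<in>topspace (nsphere p). H2 (1, x) = Nz p (\<lambda>i. 0 - f (\<lambda>j. 0) i)"
      by (simp add: H2_def)
    show ?thesis
      apply (subst homotopic_with, simp)
      apply (rule exI[where x=H2])
      using A B C by auto
  qed
  have "contractible_space (nsphere p)"
    unfolding contractible_space_def using homotopic_with_trans[OF h1 h2] by blast
  then show False using non_contractible_space_nsphere by blast
qed


lemma cont_coord [continuous_intros]: "continuous_on A (\<lambda>x::nat\<Rightarrow>real. x i)"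
  by (rule continuous_on_subset[OF continuous_on_product_coordinates]) auto

lemma simplex_sub_ball:
  assumes "n \<ge> 1" "l \<in> std_simplex n" shows "l \<in> Bp (n - 1)"
proof -
  have le: "{..n - Suc 0} = {..<n}" using assms(1) by auto
  have "(\<Sum>i<n. (l i)^2) \<le> (\<Sum>i<n. l i)"
  proof (rule sum_mono)
    fix i assume i: "i \<in> {..<n}"
    have "0 \<le> l i" using assms i by (auto simp: std_simplex_def)
    moreover have "l i \<le> 1" using assms i member_le_sum[of i "{..<n}" l]
      by (auto simp: std_simplex_def)
    ultimately show "(l i)^2 \<le> l i" by (simp add: power2_eq_square mult_left_le)
  qed
  then show ?thesis using assms by (auto simp: Bp_def nrm_def le std_simplex_def)
qed

definition rr :: "nat \<Rightarrow> (nat \<Rightarrow> real) \<Rightarrow> (nat \<Rightarrow> real)" where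
  "rr n x = (let s = (\<Sum>i<n. max (x i) 0); e = max 0 (1 - s) in
     (\<lambda>i. if i < n then (max (x i) 0 + e) / (s + real n * e) else 0))"

lemma rr_den:
  assumes "n \<ge> 1" shows "1 \<le> (\<Sum>i<n. max (x i) 0) + real n * max 0 (1 - (\<Sum>i<n. max (x i) 0))"
proof -
  have "0 \<le> (\<Sum>i<n. max (x i) 0)" by (rule sum_nonneg) auto
  moreover have "1 \<le> real n" using assms by auto
  ultimately show ?thesis
    using mult_right_mono[OF \<open>1 \<le> real n\<close>, of "max 0 (1 - (\<Sum>i<n. max (x i) 0))"]
    by (auto simp: max_def split: if_splits)
qed

lemma rr_in: assumes "n \<ge> 1" shows "rr n x \<in> std_simplex n"
proof -
  define s where "s = (\<Sum>i<n. max (x i) 0)"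
  define e where "e = max 0 (1 - s)"
  have d: "1 \<le> s + real n * e" using rr_den[OF assms, of x] by (simp add: s_def e_def)
  have "(\<Sum>i<n. (max (x i) 0 + e) / (s + real n * e)) = (\<Sum>i<n. (max (x i) 0 + e)) / (s + real n * e)"
    by (simp add: sum_divide_distrib)
  also have "(\<Sum>i<n. (max (x i) 0 + e)) = s + real n * e" by (simp add: s_def sum.distrib)
  finally have "(\<Sum>i<n. (max (x i) 0 + e) / (s + real n * e)) = 1" using d by simp
  moreover have "0 \<le> (max (x i) 0 + e) / (s + real n * e)" for i
    using d by (simp add: e_def)
  ultimately show ?thesis unfolding std_simplex_def rr_def Let_def s_def[symmetric] e_def[symmetric]
    by auto
qed

lemma rr_id: assumes "l \<in> std_simplex n" shows "rr n l = l"
proof -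
  have s: "(\<Sum>i<n. max (l i) 0) = 1" using assms by (simp add: std_simplex_def)
  show ?thesis
  proof
    fix i show "rr n l i = l i"
      using assms unfolding rr_def Let_def s by (auto simp: std_simplex_def)
  qed
qed

lemma rr_cont: fixes n :: nat assumes "n \<ge> 1" shows "continuous_on A (rr n)"
proof (rule continuous_on_coordinatewise_then_product)
  fix i
  show "continuous_on A (\<lambda>x. rr n x i)"
  proof (cases "i < n")
    case True
    have nz: "(\<Sum>i<n. max (x i) 0) + real n * max 0 (1 - (\<Sum>i<n. max (x i) 0)) \<noteq> 0" for x
      using rr_den[OF assms, of x] by linarith
    show ?thesis using True unfolding rr_def Let_def
      apply simp apply (intro continuous_intros) using nz by auto
  next
    case False then show ?thesis by (simp add: rr_def Let_def)
  qed
qed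

lemma brouwer_simplex:
  fixes n :: nat
  assumes n: "n \<ge> 1" and cg: "continuous_on (std_simplex n) g"
    and gS: "\<And>l. l \<in> std_simplex n \<Longrightarrow> g l \<in> std_simplex n"
  shows "\<exists>l\<in>std_simplex n. g l = l"
proof -
  have FP: "\<exists>x\<in>Bp (n-1). f x = x" if "continuous_on (Bp (n-1)) f" "f \<in> Bp (n-1) \<rightarrow> Bp (n-1)" for f
    using brouwer_ball[of "n-1" f] that by auto
  obtain y where "y \<in> std_simplex n" "g y = y"
  proof (rule invertible_fixpoint_property[of "std_simplex n" id "Bp (n-1)" "rr n" g])
    show "continuous_on (std_simplex n) id" by (rule continuous_on_id')
    show "id \<in> std_simplex n \<rightarrow> Bp (n - 1)" using simplex_sub_ball[OF n] by auto
    show "continuous_on (Bp (n - 1)) (rr n)" by (rule rr_cont[OF n])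
    show "rr n \<in> Bp (n - 1) \<rightarrow> std_simplex n" using rr_in[OF n] by auto
    show "rr n (id y) = y" if "y \<in> std_simplex n" for y using rr_id[OF that] by simp
    show "\<exists>x\<in>Bp (n - 1). f x = x" if "continuous_on (Bp (n - 1)) f" "f \<in> Bp (n - 1) \<rightarrow> Bp (n - 1)" for f
      using FP that by blast
    show "continuous_on (std_simplex n) g" by (rule cg)
    show "g \<in> std_simplex n \<rightarrow> std_simplex n" using gS by auto
  qed
  then show ?thesis by blast
qed

lemma compact_std_simplex: "compact (std_simplex n)"
proof -
  define B where "B = (\<lambda>i::nat. if i < n then {0..1::real} else {0})"
  have c1: "compact (PiE UNIV B)"
  proof -
    have "compactin (product_topology (\<lambda>i. euclidean) UNIV) (PiE UNIV B)"
      by (subst compactin_PiE) (auto simp: B_def)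
    then show ?thesis by (simp add: euclidean_product_topology)
  qed
  have c2: "closed {l::nat\<Rightarrow>real. (\<Sum>i<n. l i) = 1}"
    by (rule closed_Collect_eq) (intro continuous_intros)+
  have eq: "std_simplex n = {l. (\<Sum>i<n. l i) = 1} \<inter> PiE UNIV B"
  proof (rule subset_antisym; rule subsetI)
    fix l assume l: "l \<in> std_simplex n"
    have "l i \<le> 1" if "i < n" for i using l that member_le_sum[of i "{..<n}" l]
      by (auto simp: std_simplex_def)
    then show "l \<in> {l. (\<Sum>i<n. l i) = 1} \<inter> PiE UNIV B"
      using l by (auto simp: std_simplex_def B_def PiE_def Pi_def)
  next
    fix l assume "l \<in> {l. (\<Sum>i<n. l i) = 1} \<inter> PiE UNIV B"
    then show "l \<in> std_simplex n"
      by (auto simp: std_simplex_def B_def PiE_def Pi_def split: if_splits)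
         (metis not_le)+
  qed
  show ?thesis by (simp only: eq) (rule closed_Int_compact[OF c2 c1])
qed


lemma tvs_add:
  fixes f g :: "'b::topological_space \<Rightarrow> 'a::{real_vector,topological_space}"
  assumes "tvs TYPE('a)" "continuous_on A f" "continuous_on A g"
  shows "continuous_on A (\<lambda>z. f z + g z)"
proof -
  have c: "continuous_on UNIV (\<lambda>p::'a \<times> 'a. fst p + snd p)" using assms(1) by (simp add: tvs_def)
  have "continuous_on A (\<lambda>z. (\<lambda>p::'a \<times> 'a. fst p + snd p) (f z, g z))"
    by (rule continuous_on_compose2[OF c continuous_on_Pair[OF assms(2,3)]]) auto
  then show ?thesis by simp
qed

lemma tvs_scale:
  fixes c :: "'b::topological_space \<Rightarrow> real" and v :: "'a::{real_vector,topological_space}"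
  assumes "tvs TYPE('a)" "continuous_on A c"
  shows "continuous_on A (\<lambda>z. c z *\<^sub>R v)"
proof -
  have m: "continuous_on UNIV (\<lambda>p::real \<times> 'a. fst p *\<^sub>R snd p)" using assms(1) by (simp add: tvs_def)
  have "continuous_on A (\<lambda>z. (\<lambda>p::real \<times> 'a. fst p *\<^sub>R snd p) (c z, v))"
    by (rule continuous_on_compose2[OF m continuous_on_Pair[OF assms(2) continuous_on_const]]) auto
  then show ?thesis by simp
qed

lemma tvs_scale2:
  fixes c :: "'b::topological_space \<Rightarrow> real" and v :: "'b \<Rightarrow> 'a::{real_vector,topological_space}"
  assumes "tvs TYPE('a)" "continuous_on A c" "continuous_on A v"
  shows "continuous_on A (\<lambda>z. c z *\<^sub>R v z)"
proof -
  have m: "continuous_on UNIV (\<lambda>p::real \<times> 'a. fst p *\<^sub>R snd p)" using assms(1) by (simp add: tvs_def)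
  have "continuous_on A (\<lambda>z. (\<lambda>p::real \<times> 'a. fst p *\<^sub>R snd p) (c z, v z))"
    by (rule continuous_on_compose2[OF m continuous_on_Pair[OF assms(2) assms(3)]]) auto
  then show ?thesis by simp
qed

lemma tvs_sum:
  fixes v :: "nat \<Rightarrow> 'a::{real_vector,topological_space}"
  assumes "tvs TYPE('a)" "\<And>i. continuous_on A (c i)"
  shows "continuous_on A (\<lambda>z. \<Sum>i<n. c i z *\<^sub>R v i)"
proof (induction n)
  case 0 then show ?case by (simp add: continuous_on_const)
next
  case (Suc n)
  show ?case unfolding sum.lessThan_Suc
    by (rule tvs_add[OF assms(1) Suc tvs_scale[OF assms]])
qed

lemma tvs_diff:
  assumes "tvs TYPE('a::{real_vector,topological_space})"
  shows "continuous_on UNIV (\<lambda>q::'a \<times> 'a. fst q - snd q)"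
proof -
  have "continuous_on UNIV (\<lambda>q::'a \<times> 'a. fst q + (-1) *\<^sub>R snd q)"
    by (rule tvs_add[OF assms continuous_on_fst[OF continuous_on_id]
          tvs_scale2[OF assms continuous_on_const continuous_on_snd[OF continuous_on_id]]])
  then show ?thesis by simp
qed

theorem theorem7:
  fixes K :: "'a::{real_vector,topological_space} set"
    and T :: "'a \<Rightarrow> 'a set"
  assumes "tvs TYPE('a)"
    and "is_simplex K" and "K \<noteq> {}"
    and "\<forall>x\<in>K. T x \<subseteq> K"
    and "star_wnq K K T"
  shows "\<exists>xs\<in>K. xs \<in> closure_corr K K T xs"
proof -
  note tvs = assms(1)
  obtain S where S: "finite S" "K = convex hull S"
    using assms(2) unfolding is_simplex_def by blast
  define n where "n = card S"
  have "S \<noteq> {}" using assms(3) S by auto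
  then have n1: "n \<ge> 1" using S(1) n_def by (simp add: Suc_le_eq card_gt_0_iff)
  obtain xv where xv: "bij_betw xv {..<n} S"
    using ex_bij_betw_nat_finite[OF S(1)] by (auto simp: n_def atLeast0LessThan)
  have xvK: "xv i \<in> K" if "i < n" for i
    using xv that S(2) by (auto simp: bij_betw_def intro: hull_inc)
  define Rep where "Rep = (\<lambda>l. \<Sum>i<n. l i *\<^sub>R xv i)"
  have RepK: "Rep l \<in> K" if "l \<in> std_simplex n" for l
    unfolding Rep_def
    by (rule convex_sum) (use that xvK S(2) in \<open>auto simp: std_simplex_def\<close>)
  have KRep: "\<exists>l\<in>std_simplex n. z = Rep l" if zK: "z \<in> K" for z
  proof -
    obtain u where u: "\<forall>x\<in>S. 0 \<le> u x" "sum u S = 1" "(\<Sum>x\<in>S. u x *\<^sub>R x) = z"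
      using zK S convex_hull_finite[OF S(1)] by auto
    define l where "l = (\<lambda>i. if i < n then u (xv i) else 0)"
    have s1: "(\<Sum>i<n. l i) = sum u S"
      using sum.reindex_bij_betw[OF xv, of u] by (simp add: l_def)
    have s2: "Rep l = (\<Sum>x\<in>S. u x *\<^sub>R x)"
      using sum.reindex_bij_betw[OF xv, of "\<lambda>x. u x *\<^sub>R x"] by (simp add: l_def Rep_def)
    have "l \<in> std_simplex n"
      using u s1 xv by (auto simp: std_simplex_def l_def bij_betw_def)
    then show ?thesis using s2 u by auto
  qed
  have cRep: "continuous_on (std_simplex n) Rep"
    unfolding Rep_def by (rule tvs_sum[OF tvs]) (intro continuous_intros)
  have Kcomp: "compact K"
  proof -
    have "K = Rep ` std_simplex n" using RepK KRep by blast
    then show ?thesis using compact_continuous_image[OF cRep compact_std_simplex] by simp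
  qed
  have stepA: "\<exists>z\<in>K. \<exists>y\<in>T z. \<exists>v\<in>V. z = y + v" if V: "open V" "0 \<in> V" for V
  proof -
    have "wnq K K (corr_V K T V)" using assms(5) V unfolding star_wnq_def by blast
    moreover have "inj_on xv {..<n}" using xv by (simp add: bij_betw_def)
    ultimately obtain y g where
      y: "\<forall>i<n. y i \<in> corr_V K T V (xv i)" and
      g: "\<forall>i<n. continuous_on {0..1} (g i) \<and> g i 0 = 0 \<and> g i 1 = 1 \<and> g i ` {0..1} \<subseteq> {0..1}" and
      gb: "bij_betw (\<lambda>l. \<lambda>i. if i < n then g i (l i) else 0) (std_simplex n) (std_simplex n)" and
      gT: "\<forall>l\<in>std_simplex n. (\<Sum>i<n. g i (l i) *\<^sub>R y i) \<in> corr_V K T V (\<Sum>i<n. l i *\<^sub>R xv i)"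
      unfolding wnq_def using n1 xvK by blast
    have "\<forall>i<n. \<exists>m\<in>std_simplex n. y i = Rep m"
      using y KRep by (auto simp: corr_V_def)
    then obtain mu where mu: "\<And>i. i < n \<Longrightarrow> mu i \<in> std_simplex n \<and> y i = Rep (mu i)"
      by metis
    define G where "G = (\<lambda>l. \<lambda>j. if j < n then (\<Sum>i<n. g i (l i) * mu i j) else (0::real))"
    have gl: "(\<lambda>i. if i < n then g i (l i) else 0) \<in> std_simplex n" if "l \<in> std_simplex n" for l
      using gb that by (auto simp: bij_betw_def)
    have gnn: "0 \<le> g i (l i)" "(\<Sum>i<n. g i (l i)) = 1" if "l \<in> std_simplex n" "i < n" for l i
      using gl[OF that(1)] that(2) by (auto simp: std_simplex_def)
    have GS: "G l \<in> std_simplex n" if l: "l \<in> std_simplex n" for l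
    proof -
      have "0 \<le> G l j" if "j < n" for j
        unfolding G_def using that gnn[OF l] mu
        by (auto intro!: sum_nonneg mult_nonneg_nonneg simp: std_simplex_def)
      moreover have "(\<Sum>j<n. G l j) = 1"
      proof -
        have "(\<Sum>j<n. G l j) = (\<Sum>j<n. \<Sum>i<n. g i (l i) * mu i j)" by (simp add: G_def)
        also have "\<dots> = (\<Sum>i<n. g i (l i) * (\<Sum>j<n. mu i j))"
          by (subst sum.swap) (simp add: sum_distrib_left)
        also have "\<dots> = (\<Sum>i<n. g i (l i))"
          using mu by (intro sum.cong) (auto simp: std_simplex_def)
        also have "\<dots> = 1" using gnn[OF l] n1 by auto
        finally show ?thesis .
      qed
      ultimately show ?thesis by (auto simp: std_simplex_def G_def)
    qed
    have le1: "l i \<le> 1" if "l \<in> std_simplex n" "i < n" for l i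
      using that member_le_sum[of i "{..<n}" l] by (auto simp: std_simplex_def)
    have gc: "continuous_on (std_simplex n) (\<lambda>l. g i (l i))" if "i < n" for i
    proof (rule continuous_on_compose2[of "{0..1}" "g i"])
      show "continuous_on {0..1} (g i)" using g that by auto
      show "continuous_on (std_simplex n) (\<lambda>l. l i)" by (intro continuous_intros)
      show "(\<lambda>l. l i) ` std_simplex n \<subseteq> {0..1}"
        using le1 that by (auto simp: std_simplex_def)
    qed
    have GC: "continuous_on (std_simplex n) G"
    proof (rule continuous_on_coordinatewise_then_product)
      fix j
      show "continuous_on (std_simplex n) (\<lambda>l. G l j)"
        unfolding G_def by (cases "j < n") (auto intro!: continuous_intros gc)
    qed
    obtain l where l: "l \<in> std_simplex n" "G l = l"
      using brouwer_simplex[OF n1 GC GS] by blast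
    have "Rep l = (\<Sum>j<n. (\<Sum>i<n. g i (l i) * mu i j) *\<^sub>R xv j)"
    proof -
      have "l j = (\<Sum>i<n. g i (l i) * mu i j)" if "j < n" for j
        using fun_cong[OF l(2), of j] that by (simp add: G_def)
      then show ?thesis unfolding Rep_def by (intro sum.cong) auto
    qed
    also have "\<dots> = (\<Sum>i<n. g i (l i) *\<^sub>R y i)"
    proof -
      have "(\<Sum>j<n. (\<Sum>i<n. g i (l i) * mu i j) *\<^sub>R xv j) = (\<Sum>j<n. \<Sum>i<n. g i (l i) *\<^sub>R (mu i j *\<^sub>R xv j))"
        by (simp add: scaleR_sum_left)
      also have "\<dots> = (\<Sum>i<n. g i (l i) *\<^sub>R (\<Sum>j<n. mu i j *\<^sub>R xv j))"
        by (subst sum.swap) (simp add: scaleR_sum_right)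
      also have "\<dots> = (\<Sum>i<n. g i (l i) *\<^sub>R y i)"
        using mu by (intro sum.cong) (auto simp: Rep_def)
      finally show ?thesis .
    qed
    finally have eq: "Rep l = (\<Sum>i<n. g i (l i) *\<^sub>R y i)" .
    have m: "(\<Sum>i<n. g i (l i) *\<^sub>R y i) \<in> corr_V K T V (Rep l)"
      using gT l(1) by (simp add: Rep_def)
    have "Rep l \<in> corr_V K T V (Rep l)"
      using m by (simp only: eq[symmetric])
    then show ?thesis using RepK[OF l(1)] by (auto simp: corr_V_def)
  qed
  show ?thesis
  proof (rule ccontr)
    assume nx: "\<not> ?thesis"
    define Gr where "Gr = corr_graph T \<inter> (K \<times> K)"
    have loc: "\<exists>A Q. open A \<and> x \<in> A \<and> open Q \<and> 0 \<in> Q \<and> (\<forall>z\<in>A. \<forall>v\<in>Q. z \<in> K \<longrightarrow> z - v \<notin> T z)"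
      if x: "x \<in> K" for x
    proof -
      have "(x, x) \<notin> closure Gr" using nx x by (auto simp: closure_corr_def Gr_def)
      then have xx: "(x, x) \<in> - closure Gr" by simp
      have oc: "open (- closure Gr)" by (rule open_Compl[OF closed_closure])
      obtain A B where AB: "open A" "open B" "(x,x) \<in> A \<times> B" "A \<times> B \<subseteq> - closure Gr"
        by (rule open_prod_elim[OF oc xx])
      have o1: "open ((\<lambda>q::'a \<times> 'a. fst q - snd q) -` B)"
        by (rule open_vimage[OF AB(2) tvs_diff[OF tvs]])
      have o2: "(x, 0) \<in> (\<lambda>q::'a \<times> 'a. fst q - snd q) -` B" using AB by auto
      obtain P Q where PQ: "open P" "open Q" "(x,0) \<in> P \<times> Q"
          "P \<times> Q \<subseteq> (\<lambda>q::'a \<times> 'a. fst q - snd q) -` B"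
        by (rule open_prod_elim[OF o1 o2])
      show ?thesis
      proof (intro exI conjI ballI impI)
        show "open (A \<inter> P)" using AB PQ by auto
        show "x \<in> A \<inter> P" using AB PQ by auto
        show "open Q" "0 \<in> Q" using PQ by auto
        fix z v assume zv: "z \<in> A \<inter> P" "v \<in> Q" "z \<in> K"
        show "z - v \<notin> T z"
        proof
          assume zT: "z - v \<in> T z"
          have "(z, v) \<in> P \<times> Q" using zv by auto
          then have "z - v \<in> B" using PQ(4) by auto
          then have "(z, z - v) \<in> A \<times> B" using zv by auto
          then have n1: "(z, z - v) \<notin> closure Gr" using AB(4) by auto
          have "z - v \<in> K" using zT zv assms(4) by auto
          then have "(z, z - v) \<in> Gr" using zT zv by (auto simp: Gr_def corr_graph_def)
          then show False using n1 closure_subset[of Gr] by auto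
        qed
      qed
    qed
    then obtain AA QQ where AQ: "\<And>x. x \<in> K \<Longrightarrow> open (AA x) \<and> x \<in> AA x \<and> open (QQ x) \<and> 0 \<in> QQ x \<and>
        (\<forall>z\<in>AA x. \<forall>v\<in>QQ x. z \<in> K \<longrightarrow> z - v \<notin> T z)"
      by metis
    have cov: "K \<subseteq> (\<Union>c\<in>K. AA c)" using AQ by auto
    have opn: "\<And>c. c \<in> K \<Longrightarrow> open (AA c)" using AQ by auto
    obtain F where F: "F \<subseteq> K" "finite F" "K \<subseteq> (\<Union>c\<in>F. AA c)"
      by (rule compactE_image[OF Kcomp opn cov])
    define V where "V = (\<Inter>c\<in>F. QQ c)"
    have "open V" unfolding V_def using F AQ by (intro open_INT) auto
    moreover have "0 \<in> V" unfolding V_def using F AQ by auto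
    ultimately obtain z y v where zyv: "z \<in> K" "y \<in> T z" "v \<in> V" "z = y + v"
      using stepA by meson
    then obtain c where c: "c \<in> F" "z \<in> AA c" using F by auto
    have cK: "c \<in> K" using c F by auto
    have "v \<in> QQ c" using zyv c unfolding V_def by auto
    moreover have "z - v = y" using zyv by simp
    ultimately have "y \<notin> T z" using AQ[OF cK] c zyv by metis
    then show False using zyv by simp
  qed
qed

end
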